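(* Let $L>0$, $g\in L^2((0,L)^2;\mathbb{C})$, and let $P:L^2(0,L)\to L^2(0,L)$ be a bounded linear operator such that $P^*(D(A^* ))\subset D(A^* )$ and $A_0^*P^*z-P^*A^*z=0$ for all $z\in\ker B^*$. Then $\ker P^*=\{0\}$ if and only if the following four conditions hold: (i) $\ker P^*\subset D(A^* )$; (ii) $\ker P^*\subset\ker B^*$; (iii) $\dim\ker P^*<+\infty$; (iv) $\ker(\lambda-A^* )\cap\ker B^*=\{0\}$ for every $\lambda\in\mathbb{C}$.
   Context: $D(A^* )=\{z\in H^1(0,L):z(0)=0\}$; $A^*z(x)=-z'(x)+\int_0^L\overline{g(y,x)}z(y)dy$ and $A_0^*z=-z'$, both with domain $D(A^* )$; $B^*:D(A^* )\to\mathbb{C}$, $B^*z=z(L)$. *)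

theory Defs
  imports "HOL-Analysis.Analysis"
begin

text \<open>Elements of L^2(0,L;C) are represented by functions real => complex;
  equality in L^2 is equality almost everywhere on (0,L).\<close>

definition L2 :: "real \<Rightarrow> (real \<Rightarrow> complex) set" where
  "L2 L = {f. f \<in> borel_measurable lborel \<and>
              set_integrable lborel {0<..<L} (\<lambda>x. (cmod (f x))\<^sup>2)}"

definition aeq :: "real \<Rightarrow> (real \<Rightarrow> complex) \<Rightarrow> (real \<Rightarrow> complex) \<Rightarrow> bool" where
  "aeq L f g \<longleftrightarrow> (AE x in lborel. x \<in> {0<..<L} \<longrightarrow> f x = g x)"

definition l2inner :: "real \<Rightarrow> (real \<Rightarrow> complex) \<Rightarrow> (real \<Rightarrow> complex) \<Rightarrow> complex" where
  "l2inner L f g = (LINT x:{0<..<L}|lborel. f x * cnj (g x))"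

definition l2norm :: "real \<Rightarrow> (real \<Rightarrow> complex) \<Rightarrow> real" where
  "l2norm L f = sqrt (LINT x:{0<..<L}|lborel. (cmod (f x))\<^sup>2)"

definition bounded_op :: "real \<Rightarrow> ((real \<Rightarrow> complex) \<Rightarrow> (real \<Rightarrow> complex)) \<Rightarrow> bool" where
  "bounded_op L P \<longleftrightarrow>
     (\<forall>f\<in>L2 L. P f \<in> L2 L) \<and>
     (\<forall>f\<in>L2 L. \<forall>g\<in>L2 L. aeq L f g \<longrightarrow> aeq L (P f) (P g)) \<and>
     (\<forall>f\<in>L2 L. \<forall>g\<in>L2 L. \<forall>a b::complex.
        aeq L (P (\<lambda>x. a * f x + b * g x)) (\<lambda>x. a * P f x + b * P g x)) \<and>
     (\<exists>C. \<forall>f\<in>L2 L. l2norm L (P f) \<le> C * l2norm L f)"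

definition is_adjoint :: "real \<Rightarrow> ((real \<Rightarrow> complex) \<Rightarrow> (real \<Rightarrow> complex))
    \<Rightarrow> ((real \<Rightarrow> complex) \<Rightarrow> (real \<Rightarrow> complex)) \<Rightarrow> bool" where
  "is_adjoint L P Ps \<longleftrightarrow>
     (\<forall>g\<in>L2 L. Ps g \<in> L2 L \<and> (\<forall>f\<in>L2 L. l2inner L (P f) g = l2inner L f (Ps g)))"

text \<open>z has an H^1 representative with zero value at 0 and derivative w:
  z(x) = int_0^x w a.e. on (0,L), with w in L^2.\<close>
definition is_deriv0 :: "real \<Rightarrow> (real \<Rightarrow> complex) \<Rightarrow> (real \<Rightarrow> complex) \<Rightarrow> bool" where
  "is_deriv0 L z w \<longleftrightarrow> w \<in> L2 L \<and>
     (AE x in lborel. x \<in> {0<..<L} \<longrightarrow> z x = (LINT t:{0..x}|lborel. w t))"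

text \<open>D(A^*) = {z in H^1(0,L) : z(0) = 0}.\<close>
definition DAs :: "real \<Rightarrow> (real \<Rightarrow> complex) \<Rightarrow> bool" where
  "DAs L z \<longleftrightarrow> z \<in> L2 L \<and> (\<exists>w. is_deriv0 L z w)"

definition dz :: "real \<Rightarrow> (real \<Rightarrow> complex) \<Rightarrow> (real \<Rightarrow> complex)" where
  "dz L z = (SOME w. is_deriv0 L z w)"

text \<open>B^* z = z(L) (value of the continuous representative).\<close>
definition Bs :: "real \<Rightarrow> (real \<Rightarrow> complex) \<Rightarrow> complex" where
  "Bs L z = (LINT t:{0..L}|lborel. dz L z t)"

definition As :: "real \<Rightarrow> (real \<Rightarrow> real \<Rightarrow> complex) \<Rightarrow> (real \<Rightarrow> complex) \<Rightarrow> (real \<Rightarrow> complex)" where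
  "As L g z = (\<lambda>x. - dz L z x + (LINT y:{0<..<L}|lborel. cnj (g y x) * z y))"

definition A0s :: "real \<Rightarrow> (real \<Rightarrow> complex) \<Rightarrow> (real \<Rightarrow> complex)" where
  "A0s L z = (\<lambda>x. - dz L z x)"

definition kerBs :: "real \<Rightarrow> (real \<Rightarrow> complex) set" where
  "kerBs L = {z. DAs L z \<and> Bs L z = 0}"

definition kerop :: "real \<Rightarrow> ((real \<Rightarrow> complex) \<Rightarrow> (real \<Rightarrow> complex)) \<Rightarrow> (real \<Rightarrow> complex) set" where
  "kerop L Q = {z \<in> L2 L. aeq L (Q z) (\<lambda>_. 0)}"

definition fin_dim :: "real \<Rightarrow> (real \<Rightarrow> complex) set \<Rightarrow> bool" where
  "fin_dim L S \<longleftrightarrow> (\<exists>F. finite F \<and> F \<subseteq> S \<and>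
     (\<forall>z\<in>S. \<exists>c. aeq L z (\<lambda>x. \<Sum>f\<in>F. c f * f x)))"

end

theory Submission
  imports Defs "HOL-Library.Function_Algebras" "HOL-Computational_Algebra.Polynomial"
    "HOL-Computational_Algebra.Fundamental_Theorem_Algebra"
begin


lemma sq_aux1: "(t::real) \<le> 1 + t^2"
proof -
  have "0 \<le> (t - 1)^2" by simp
  hence "0 \<le> t^2 - 2 * t + 1" by (simp add: power2_eq_square algebra_simps)
  moreover have "0 \<le> t^2" by simp
  ultimately show ?thesis by linarith
qed

lemma sq_aux2: "(s::real) * t \<le> s^2 + t^2"
proof -
  have "0 \<le> (s - t)^2" by simp
  hence "0 \<le> s^2 - 2 * s * t + t^2" by (simp add: power2_eq_square algebra_simps)
  moreover have "0 \<le> s^2" "0 \<le> t^2" by simp_all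
  ultimately show ?thesis by linarith
qed

lemma sq_aux3: "((s::real) + t)^2 \<le> 2 * (s^2) + 2 * (t^2)"
proof -
  have "0 \<le> (s - t)^2" by simp
  hence "0 \<le> s^2 - 2 * s * t + t^2" by (simp add: power2_eq_square algebra_simps)
  moreover have "(s+t)^2 = s^2 + 2 * s * t + t^2" by (simp add: power2_eq_square algebra_simps)
  ultimately show ?thesis by linarith
qed

lemma meas_cnj[measurable]: "f \<in> borel_measurable M \<Longrightarrow> (\<lambda>x. cnj (f x :: complex)) \<in> borel_measurable M"
  by (rule borel_measurable_continuous_on[where f=cnj]) (auto intro: continuous_on_cnj continuous_on_id)

lemma L2_meas: "f \<in> L2 L \<Longrightarrow> f \<in> borel_measurable lborel"
  by (simp add: L2_def)

lemma L2_sq: "f \<in> L2 L \<Longrightarrow> set_integrable lborel {0<..<L} (\<lambda>x. (cmod (f x))^2)"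
  by (simp add: L2_def)

lemma ind_int: "set_integrable lborel {0<..<(L::real)} (\<lambda>x. 1::real)"
proof -
  have "emeasure lborel {0<..<L} < \<infinity>"
  proof (cases "0 \<le> L")
    case True then show ?thesis by (simp add: ennreal_less_top)
  qed simp
  then show ?thesis unfolding set_integrable_def
    by (simp add: integrable_indicator_iff)
qed


lemma L2_int: assumes "f \<in> L2 L" shows "set_integrable lborel {0<..<L} f"
proof (rule set_integrable_bound[where f="\<lambda>x. 1 + (cmod (f x))^2"])
  show "set_integrable lborel {0<..<L} (\<lambda>x. 1 + (cmod (f x))^2)"
    using ind_int L2_sq[OF assms] by (rule set_integral_add)
  show "set_borel_measurable lborel {0<..<L} f" using L2_meas[OF assms]
    by (simp add: set_borel_measurable_def)
  show "AE x in lborel. x \<in> {0<..<L} \<longrightarrow> norm (f x) \<le> norm (1 + (cmod (f x))^2)"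
  proof (intro AE_I2 impI)
    fix x have "cmod (f x) \<le> 1 + (cmod (f x))^2" by (rule sq_aux1)
    then show "norm (f x) \<le> norm (1 + (cmod (f x))^2)" by simp
  qed
qed

lemma L2_lin: assumes "f \<in> L2 L" "g \<in> L2 L" shows "(\<lambda>x. a * f x + b * g x) \<in> L2 L"
proof -
  have m: "(\<lambda>x. a * f x + b * g x) \<in> borel_measurable lborel"
    using L2_meas[OF assms(1)] L2_meas[OF assms(2)] by simp
  have "set_integrable lborel {0<..<L} (\<lambda>x. (cmod (a * f x + b * g x))^2)"
  proof (rule set_integrable_bound[where f="\<lambda>x. 2 * ((cmod a * cmod (f x))^2) + 2 * ((cmod b * cmod (g x))^2)"])
    show "set_integrable lborel {0<..<L} (\<lambda>x. 2 * ((cmod a * cmod (f x))^2) + 2 * ((cmod b * cmod (g x))^2))"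
      using L2_sq[OF assms(1)] L2_sq[OF assms(2)] by (simp add: power_mult_distrib)
    show "set_borel_measurable lborel {0<..<L} (\<lambda>x. (cmod (a * f x + b * g x))^2)"
      using m unfolding set_borel_measurable_def by simp
    show "AE x in lborel. x \<in> {0<..<L} \<longrightarrow> norm ((cmod (a * f x + b * g x))^2) \<le> norm (2 * ((cmod a * cmod (f x))^2) + 2 * ((cmod b * cmod (g x))^2))"
    proof (intro AE_I2 impI)
      fix x
      have t: "cmod (a * f x + b * g x) \<le> cmod a * cmod (f x) + cmod b * cmod (g x)"
        by (metis norm_mult norm_triangle_ineq)
      have "(cmod (a * f x + b * g x))^2 \<le> (cmod a * cmod (f x) + cmod b * cmod (g x))^2"
        using t by (simp add: power_mono)
      also have "\<dots> \<le> 2 * ((cmod a * cmod (f x))^2) + 2 * ((cmod b * cmod (g x))^2)"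
        by (rule sq_aux3)
      finally show "norm ((cmod (a * f x + b * g x))^2) \<le> norm (2 * ((cmod a * cmod (f x))^2) + 2 * ((cmod b * cmod (g x))^2))"
        by simp
    qed
  qed
  with m show ?thesis by (simp add: L2_def)
qed

lemma L2_prod: assumes "f \<in> L2 L" "g \<in> L2 L"
  shows "set_integrable lborel {0<..<L} (\<lambda>x. f x * cnj (g x))"
proof (rule set_integrable_bound[where f="\<lambda>x. (cmod (f x))^2 + (cmod (g x))^2"])
  show "set_integrable lborel {0<..<L} (\<lambda>x. (cmod (f x))^2 + (cmod (g x))^2)"
    using L2_sq[OF assms(1)] L2_sq[OF assms(2)] by (intro set_integral_add)
  show "set_borel_measurable lborel {0<..<L} (\<lambda>x. f x * cnj (g x))"
  proof -
    note [measurable] = L2_meas[OF assms(1)] L2_meas[OF assms(2)]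
    show ?thesis unfolding set_borel_measurable_def by measurable
  qed
  show "AE x in lborel. x \<in> {0<..<L} \<longrightarrow> norm (f x * cnj (g x)) \<le> norm ((cmod (f x))^2 + (cmod (g x))^2)"
  proof (intro AE_I2 impI)
    fix x
    have "cmod (f x) * cmod (g x) \<le> (cmod (f x))^2 + (cmod (g x))^2" by (rule sq_aux2)
    then show "norm (f x * cnj (g x)) \<le> norm ((cmod (f x))^2 + (cmod (g x))^2)"
      by (simp add: norm_mult)
  qed
qed


lemma aeq_refl: "aeq L f f" by (simp add: aeq_def)
lemma aeq_sym: "aeq L f g \<Longrightarrow> aeq L g f" unfolding aeq_def by (auto elim: AE_mp)
lemma aeq_trans: assumes "aeq L f g" "aeq L g h" shows "aeq L f h"
  using assms unfolding aeq_def by eventually_elim auto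
lemma aeq_lin: assumes "aeq L f f'" "aeq L g g'" shows "aeq L (\<lambda>x. a * f x + b * g x) (\<lambda>x. a * f' x + b * g' x)"
  using assms unfolding aeq_def by eventually_elim auto
lemma aeqI: "(\<And>x. x \<in> {0<..<L} \<Longrightarrow> f x = g x) \<Longrightarrow> aeq L f g"
  unfolding aeq_def by auto

lemma l2inner_lin2: assumes "f \<in> L2 L" "g \<in> L2 L" "h \<in> L2 L"
  shows "l2inner L h (\<lambda>x. a * f x + b * g x) = cnj a * l2inner L h f + cnj b * l2inner L h g"
proof -
  have "l2inner L h (\<lambda>x. a * f x + b * g x) = (LINT x:{0<..<L}|lborel. cnj a * (h x * cnj (f x)) + cnj b * (h x * cnj (g x)))"
    unfolding l2inner_def by (simp add: algebra_simps)
  also have "\<dots> = (LINT x:{0<..<L}|lborel. cnj a * (h x * cnj (f x))) + (LINT x:{0<..<L}|lborel. cnj b * (h x * cnj (g x)))"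
    using L2_prod[OF assms(3,1)] L2_prod[OF assms(3,2)] by (intro set_integral_add) auto
  also have "\<dots> = cnj a * l2inner L h f + cnj b * l2inner L h g"
    unfolding l2inner_def by simp
  finally show ?thesis .
qed

lemma l2inner_cong2: assumes "aeq L f g" "f \<in> L2 L" "g \<in> L2 L" "h \<in> L2 L"
  shows "l2inner L h f = l2inner L h g"
  unfolding l2inner_def
proof (rule set_lebesgue_integral_cong_AE)
  show "(\<lambda>x. h x * cnj (f x)) \<in> borel_measurable lborel" "(\<lambda>x. h x * cnj (g x)) \<in> borel_measurable lborel"
    using L2_meas[OF assms(2)] L2_meas[OF assms(3)] L2_meas[OF assms(4)] by simp_all
  show "AE x\<in>{0<..<L} in lborel. h x * cnj (f x) = h x * cnj (g x)"
    using assms(1) unfolding aeq_def by eventually_elim auto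
qed simp

lemma l2inner_self_zero: assumes "h \<in> L2 L" "l2inner L h h = 0" shows "aeq L h (\<lambda>_. 0)"
proof -
  have "l2inner L h h = (LINT x:{0<..<L}|lborel. complex_of_real ((cmod (h x))^2))"
    unfolding l2inner_def by (rule set_lebesgue_integral_cong) (auto simp: complex_norm_square[symmetric] simp del: of_real_power)
  also have "\<dots> = complex_of_real (LINT x:{0<..<L}|lborel. (cmod (h x))^2)"
    by (rule set_integral_complex_of_real)
  finally have "(LINT x:{0<..<L}|lborel. (cmod (h x))^2) = 0" using assms(2) by simp
  hence "(LINT x|lborel. indicator {0<..<L} x * (cmod (h x))^2) = 0"
    by (simp add: set_lebesgue_integral_def)
  moreover have "integrable lborel (\<lambda>x. indicator {0<..<L} x * (cmod (h x))^2)"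
    using L2_sq[OF assms(1)] by (simp add: set_integrable_def)
  ultimately have "AE x in lborel. indicator {0<..<L} x * (cmod (h x))^2 = 0"
    by (subst (asm) integral_nonneg_eq_0_iff_AE) auto
  then show ?thesis unfolding aeq_def by eventually_elim (auto simp: indicator_def)
qed

lemma l2_ext: assumes "u \<in> L2 L" "v \<in> L2 L" "\<And>h. h \<in> L2 L \<Longrightarrow> l2inner L h u = l2inner L h v"
  shows "aeq L u v"
proof -
  define h where "h = (\<lambda>x. 1 * u x + (-1) * v x)"
  have hL: "h \<in> L2 L" unfolding h_def by (rule L2_lin[OF assms(1,2)])
  have "l2inner L h h = l2inner L h u - l2inner L h v"
    unfolding h_def[of] using l2inner_lin2[OF assms(1,2) hL, of 1 "-1"] by (simp add: h_def)
  also have "\<dots> = 0" using assms(3)[OF hL] by simp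
  finally have "aeq L h (\<lambda>_. 0)" by (rule l2inner_self_zero[OF hL])
  then show ?thesis unfolding aeq_def h_def by eventually_elim auto
qed

lemma adj_in: "is_adjoint L P Ps \<Longrightarrow> f \<in> L2 L \<Longrightarrow> Ps f \<in> L2 L"
  by (simp add: is_adjoint_def)

lemma bop_in: "bounded_op L P \<Longrightarrow> f \<in> L2 L \<Longrightarrow> P f \<in> L2 L"
  by (simp add: bounded_op_def)

lemma adj_resp: assumes "bounded_op L P" "is_adjoint L P Ps" "f \<in> L2 L" "g \<in> L2 L" "aeq L f g"
  shows "aeq L (Ps f) (Ps g)"
proof (rule l2_ext)
  show "Ps f \<in> L2 L" "Ps g \<in> L2 L" using assms adj_in by blast+
  fix h assume h: "h \<in> L2 L"
  have "l2inner L h (Ps f) = l2inner L (P h) f" using assms(2,3) h by (simp add: is_adjoint_def)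
  also have "\<dots> = l2inner L (P h) g" by (rule l2inner_cong2[OF assms(5,3,4) bop_in[OF assms(1) h]])
  also have "\<dots> = l2inner L h (Ps g)" using assms(2,4) h by (simp add: is_adjoint_def)
  finally show "l2inner L h (Ps f) = l2inner L h (Ps g)" .
qed

lemma adj_lin: assumes "bounded_op L P" "is_adjoint L P Ps" "f \<in> L2 L" "g \<in> L2 L"
  shows "aeq L (Ps (\<lambda>x. a * f x + b * g x)) (\<lambda>x. a * Ps f x + b * Ps g x)"
proof (rule l2_ext)
  have fg: "(\<lambda>x. a * f x + b * g x) \<in> L2 L" by (rule L2_lin[OF assms(3,4)])
  show "Ps (\<lambda>x. a * f x + b * g x) \<in> L2 L" using assms(2) fg adj_in by blast
  have pf: "Ps f \<in> L2 L" "Ps g \<in> L2 L" using assms adj_in by blast+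
  show "(\<lambda>x. a * Ps f x + b * Ps g x) \<in> L2 L" by (rule L2_lin[OF pf])
  fix h assume h: "h \<in> L2 L"
  have ph: "P h \<in> L2 L" by (rule bop_in[OF assms(1) h])
  have "l2inner L h (Ps (\<lambda>x. a * f x + b * g x)) = l2inner L (P h) (\<lambda>x. a * f x + b * g x)"
    using assms(2) fg h by (simp add: is_adjoint_def)
  also have "\<dots> = cnj a * l2inner L (P h) f + cnj b * l2inner L (P h) g"
    by (rule l2inner_lin2[OF assms(3,4) ph])
  also have "\<dots> = cnj a * l2inner L h (Ps f) + cnj b * l2inner L h (Ps g)"
    using assms(2,3,4) h by (simp add: is_adjoint_def)
  also have "\<dots> = l2inner L h (\<lambda>x. a * Ps f x + b * Ps g x)"
    by (rule l2inner_lin2[OF pf h, symmetric])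
  finally show "l2inner L h (Ps (\<lambda>x. a * f x + b * g x)) = l2inner L h (\<lambda>x. a * Ps f x + b * Ps g x)" .
qed


lemma zero_cont:
  fixes F :: "real \<Rightarrow> complex"
  assumes c: "continuous_on {0..L} F" and ae: "AE x in lborel. x \<in> {0<..<L} \<longrightarrow> F x = 0"
    and x: "x \<in> {0..L}" and L: "0 < L"
  shows "F x = 0"
proof -
  from AE_E[OF ae] obtain N where N0: "{y \<in> space lborel. \<not> (y \<in> {0<..<L} \<longrightarrow> F y = 0)} \<subseteq> N"
    "emeasure lborel N = 0" "N \<in> sets lborel" by metis
  hence N: "N \<in> null_sets lborel" "{y. \<not> (y \<in> {0<..<L} \<longrightarrow> F y = 0)} \<subseteq> N"
    by (auto simp: null_sets_def)
  define S where "S = {0<..<L} - N"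
  have "x \<in> closure S"
  proof (unfold closure_approachable, intro allI impI)
    fix e :: real assume e: "0 < e"
    define a where "a = max 0 (x - e)"
    define b where "b = min L (x + e)"
    have ab: "a < b" using x e L by (auto simp: a_def b_def)
    have "\<not> {a<..<b} \<subseteq> N"
    proof
      assume "{a<..<b} \<subseteq> N"
      hence "emeasure lborel {a<..<b} \<le> emeasure lborel N" by (intro emeasure_mono) (use N in auto)
      also have "\<dots> = 0" using N by auto
      finally show False using ab by simp
    qed
    then obtain y where y: "y \<in> {a<..<b}" "y \<notin> N" by blast
    have "y \<in> S" using y by (auto simp: S_def a_def b_def)
    moreover have "dist y x < e" using y by (auto simp: a_def b_def dist_real_def)
    ultimately show "\<exists>y\<in>S. dist y x < e" by blast
  qed
  moreover have "closure S \<subseteq> {0..L}"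
    by (rule closure_minimal) (auto simp: S_def)
  ultimately show ?thesis
    using continuous_constant_on_closure[of S F 0 x] continuous_on_subset[OF c] N(2)
    by (auto simp: S_def)
qed

lemma L2_int_Icc: assumes "f \<in> L2 L" shows "set_integrable lborel {0..L} f"
proof -
  have "set_integrable lborel {0<..<L} f" by (rule L2_int[OF assms])
  moreover have "set_integrable lborel {0<..<L} f \<longleftrightarrow> set_integrable lborel {0..L} f"
    by (rule set_integrable_discrete_difference[where X="{0,L}"]) auto
  ultimately show ?thesis by simp
qed

lemma L2_int_sub: assumes "f \<in> L2 L" "0 \<le> a" "b \<le> L" shows "set_integrable lborel {a..b} f"
  by (rule set_integrable_subset[OF L2_int_Icc[OF assms(1)]]) (use assms in auto)

lemma L2_int_cont: assumes "f \<in> L2 L"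
  shows "continuous_on {0..L} (\<lambda>x. LINT t:{0..x}|lborel. f t)"
proof -
  have i: "f integrable_on {0..L}" using set_borel_integral_eq_integral(1)[OF L2_int_Icc[OF assms]] .
  have "continuous_on {0..L} (\<lambda>x. integral {0..x} f)" by (rule indefinite_integral_continuous_1[OF i])
  moreover have "\<And>x. x \<in> {0..L} \<Longrightarrow> (LINT t:{0..x}|lborel. f t) = integral {0..x} f"
    using set_borel_integral_eq_integral(2)[OF L2_int_sub[OF assms]] by auto
  ultimately show ?thesis using continuous_on_cong by (smt (verit))
qed


lemma set_int_ind: "(LINT x:A|M. indicator B x *\<^sub>R g x) = (LINT x:(A \<inter> B)|M. (g x :: complex))"
  unfolding set_lebesgue_integral_def by (simp add: indicator_inter_arith)

lemma deriv_zero: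
  assumes L: "0 < L" and w: "w \<in> L2 L"
    and ae: "AE x in lborel. x \<in> {0<..<L} \<longrightarrow> (LINT t:{0..x}|lborel. w t) = 0"
  shows "aeq L w (\<lambda>_. 0)"
proof -
  define F where "F = (\<lambda>x. LINT t:{0..x}|lborel. w t)"
  have F0: "F x = 0" if "x \<in> {0..L}" for x
    using zero_cont[OF L2_int_cont[OF w] _ that L] ae unfolding F_def by simp
  define f where "f = (\<lambda>x. indicator {0<..<L} x *\<^sub>R w x)"
  have fint: "integrable lborel f" using L2_int[OF w] unfolding f_def set_integrable_def .
  have basic0: "(LINT x:{..a}|lborel. f x) = 0" for a
  proof -
    have "(LINT x:{..a}|lborel. f x) = (LINT x:({..a} \<inter> {0<..<L})|lborel. w x)"
      unfolding f_def by (rule set_int_ind)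
    also have "\<dots> = 0"
    proof (cases "a \<le> 0")
      case True then have "{..a} \<inter> {0<..<L} = {}" by auto
      then show ?thesis by (simp add: set_lebesgue_integral_def)
    next
      case False
      have "(LINT x:({..a} \<inter> {0<..<L})|lborel. w x) = (LINT x:{0..min a L}|lborel. w x)"
        by (rule set_integral_discrete_difference[where X="{0,a,L}"]) (auto simp: min_def)
      also have "\<dots> = F (min a L)" by (simp add: F_def)
      also have "\<dots> = 0" using False L by (intro F0) auto
      finally show ?thesis .
    qed
    finally show ?thesis .
  qed
  have total: "(LINT x|lborel. f x) = 0"
  proof -
    have "(LINT x|lborel. f x) = (LINT x:{..L}|lborel. f x)"
      unfolding set_lebesgue_integral_def f_def by (intro Bochner_Integration.integral_cong) (auto simp: indicator_def)
    then show ?thesis using basic0 by simp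
  qed
  have sb: "sets borel = sigma_sets UNIV (range (\<lambda>a. {..a::real}))"
    by (subst borel_eq_atMost) (rule sets_measure_of, simp)
  have all: "(LINT x:A|lborel. f x) = 0" if A: "A \<in> sets borel" for A
  proof -
    have A': "A \<in> sigma_sets UNIV (range (\<lambda>a. {..a::real}))"
      using A sb by simp
    have ist: "Int_stable (range (\<lambda>a. {..a::real}))"
      unfolding Int_stable_def by (auto simp: Int_atMost)
    have pw: "range (\<lambda>a. {..a::real}) \<subseteq> Pow UNIV" by auto
    from ist pw A' show ?thesis
    proof (induction rule: sigma_sets_induct_disjoint)
      case (basic A) then show ?case using basic0 by auto
    next
      case empty then show ?case by (simp add: set_lebesgue_integral_def)
    next
      case (compl A)
      have Ab: "A \<in> sets borel"
        using compl(1) sb by simp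
      have "(LINT x:(UNIV - A)|lborel. f x) = (LINT x|lborel. f x - indicator A x *\<^sub>R f x)"
        unfolding set_lebesgue_integral_def
        by (intro Bochner_Integration.integral_cong) (auto simp: indicator_def)
      also have "\<dots> = (LINT x|lborel. f x) - (LINT x:A|lborel. f x)"
        unfolding set_lebesgue_integral_def
        using fint Ab by (intro Bochner_Integration.integral_diff integrable_mult_indicator) auto
      also have "\<dots> = 0" using total compl(2) by simp
      finally show ?case .
    next
      case (union A)
      have Ab: "A i \<in> sets borel" for i
        using union(2) sb by auto
      have "(LINT x:(\<Union>i. A i)|lborel. f x) = (\<Sum>i. (LINT x:(A i)|lborel. f x))"
        using union(1) Ab fint
        by (intro lebesgue_integral_countable_add)
           (auto simp: disjoint_family_on_def set_integrable_def intro!: integrable_mult_indicator)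
      also have "\<dots> = 0" using union(3) by simp
      finally show ?case .
    qed
  qed
  have "AE x in lborel. f x = 0"
    by (rule sigma_finite_measure.density_zero[OF sigma_finite_lborel fint]) (use all in auto)
  then show ?thesis unfolding aeq_def f_def by eventually_elim (auto simp: indicator_def)
qed




lemma ode_zero:
  assumes L: "0 < L" and d: "d \<in> L2 L"
    and ae: "AE x in lborel. x \<in> {0<..<L} \<longrightarrow> d x = c * (LINT t:{0..x}|lborel. d t)"
    and x: "x \<in> {0..L}"
  shows "(LINT t:{0..x}|lborel. d t) = 0"
proof -
  define F where "F = (\<lambda>x. LINT t:{0..x}|lborel. d t)"
  have FI: "F x = integral {0..x} d" if "x \<in> {0..L}" for x
    using set_borel_integral_eq_integral(2)[OF L2_int_sub[OF d]] that by (auto simp: F_def)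
  have Fc: "continuous_on {0..L} F" unfolding F_def by (rule L2_int_cont[OF d])
  have ae': "AE y in lborel. y \<in> {0<..<L} \<longrightarrow> d y = c * F y" using ae unfolding F_def .
  from AE_E[OF ae'] obtain N where N0: "{y \<in> space lborel. \<not> (y \<in> {0<..<L} \<longrightarrow> d y = c * F y)} \<subseteq> N"
    "emeasure lborel N = 0" "N \<in> sets lborel" by metis
  have negN: "negligible (N \<union> {0, L})"
  proof -
    have "N \<in> null_sets lborel" using N0 by (auto simp: null_sets_def)
    hence "N \<in> null_sets lebesgue" by (rule null_sets_completionI)
    hence "negligible N" by (simp add: negligible_iff_null_sets)
    moreover have "negligible {0, L}" by (rule negligible_finite) auto
    ultimately show ?thesis by (rule negligible_Un)
  qed
  have Feq: "F y = integral {0..y} (\<lambda>t. c * F t)" if y: "y \<in> {0..L}" for y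
  proof -
    have "F y = integral {0..y} d" using FI[OF y] .
    also have "\<dots> = integral {0..y} (\<lambda>t. c * F t)"
    proof (rule integral_spike[OF negN])
      fix t assume t: "t \<in> {0..y} - (N \<union> {0, L})"
      then have "t \<in> {0<..<L}" using y by auto
      show "c * F t = d t"
      proof (rule ccontr)
        assume "c * F t \<noteq> d t"
        then have "t \<in> N" using N0(1) \<open>t \<in> {0<..<L}\<close> by auto
        with t show False by auto
      qed
    qed
    finally show ?thesis .
  qed
  have cF: "continuous_on {0..L} (\<lambda>t. c * F t)" by (intro continuous_intros Fc)
  have Fd: "(F has_vector_derivative c * F y) (at y within {0..L})" if y: "y \<in> {0..L}" for y
  proof -
    have "((\<lambda>u. integral {0..u} (\<lambda>t. c * F t)) has_vector_derivative c * F y) (at y within {0..L})"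
      by (rule integral_has_vector_derivative[OF cF y])
    then show ?thesis
      by (rule has_vector_derivative_transform_within[where d=1, OF _ _ y]) (simp, metis Feq)
  qed
  define H where "H = (\<lambda>y. exp (y *\<^sub>R (- c)) * F y)"
  have "\<exists>k. \<forall>y\<in>{0..L}. H y = k"
  proof (rule has_derivative_zero_constant)
    fix y assume y: "y \<in> {0..L}"
    have "(H has_vector_derivative exp (y *\<^sub>R (- c)) * (c * F y) + exp (y *\<^sub>R (- c)) * (- c) * F y) (at y within {0..L})"
      unfolding H_def by (intro has_vector_derivative_mult exp_scaleR_has_vector_derivative_right Fd y)
    moreover have "exp (y *\<^sub>R (- c)) * (c * F y) + exp (y *\<^sub>R (- c)) * (- c) * F y = 0"
      by (simp add: algebra_simps)
    ultimately show "(H has_derivative (\<lambda>h. 0)) (at y within {0..L})"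
      by (simp add: has_vector_derivative_def)
  qed simp
  then obtain k where k: "\<And>y. y \<in> {0..L} \<Longrightarrow> H y = k" by blast
  have "F 0 = 0" using FI[of 0] L by simp
  hence "H 0 = 0" by (simp add: H_def)
  hence "H x = 0" using k[of 0] k[OF x] L by auto
  then show ?thesis by (simp add: H_def F_def)
qed



lemma K_L2:
  fixes g :: "real \<Rightarrow> real \<Rightarrow> complex"
  assumes gm: "(\<lambda>(x, y). g x y) \<in> borel_measurable (lborel \<Otimes>\<^sub>M lborel)"
    and gi: "set_integrable (lborel \<Otimes>\<^sub>M lborel) ({0<..<L} \<times> {0<..<L}) (\<lambda>(x, y). (cmod (g x y))\<^sup>2)"
    and z: "z \<in> L2 L"
  shows "(\<lambda>x. LINT y:{0<..<L}|lborel. cnj (g y x) * z y) \<in> L2 L"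
proof -
  define I where "I = {0<..<L}"
  define K where "K = (\<lambda>x. LINT y:I|lborel. cnj (g y x) * z y)"
  have zm[measurable]: "z \<in> borel_measurable lborel" using L2_meas[OF z] .
  have gs[measurable]: "(\<lambda>p. g (snd p) (fst p)) \<in> borel_measurable (lborel \<Otimes>\<^sub>M lborel)"
  proof -
    have "(\<lambda>p. (\<lambda>(x, y). g x y) (snd p, fst p)) \<in> borel_measurable (lborel \<Otimes>\<^sub>M lborel)"
      by (rule measurable_compose[OF _ gm]) measurable
    then show ?thesis by simp
  qed
  have Km: "K \<in> borel_measurable lborel"
  proof -
    have "(\<lambda>(x, y). indicator I y *\<^sub>R (cnj (g y x) * z y)) \<in> borel_measurable (lborel \<Otimes>\<^sub>M lborel)"
      unfolding I_def by measurable
    then show ?thesis unfolding K_def set_lebesgue_integral_def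
      by (rule lborel.borel_measurable_lebesgue_integral)
  qed
  define Z where "Z = (\<integral>\<^sup>+ y. ennreal (indicator I y * (cmod (z y))\<^sup>2) \<partial>lborel)"
  have Zf: "Z < \<infinity>"
  proof -
    have "integrable lborel (\<lambda>y. indicator I y *\<^sub>R (cmod (z y))\<^sup>2)"
      using L2_sq[OF z] unfolding set_integrable_def I_def .
    then show ?thesis unfolding Z_def by (simp add: integrable_iff_bounded)
  qed
  define A where "A = (\<lambda>x. \<integral>\<^sup>+ y. ennreal (indicator I y * (cmod (g y x))\<^sup>2) \<partial>lborel)"
  have gx[measurable]: "(\<lambda>y. g y x) \<in> borel_measurable lborel" for x
  proof -
    have "(\<lambda>y. (\<lambda>(a, b). g a b) (y, x)) \<in> borel_measurable lborel"
      by (rule measurable_compose[OF _ gm]) measurable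
    then show ?thesis by simp
  qed
  have pw: "ennreal (indicator I x * (cmod (K x))\<^sup>2) \<le> ennreal (indicator I x) * (A x * Z)" for x
  proof -
    have b1: "ennreal (cmod (K x)) \<le> (\<integral>\<^sup>+ y. ennreal (indicator I y * cmod (g y x)) * ennreal (indicator I y * cmod (z y)) \<partial>lborel)"
    proof (cases "integrable lborel (\<lambda>y. indicator I y *\<^sub>R (cnj (g y x) * z y))")
      case True
      have "ennreal (cmod (K x)) \<le> (\<integral>\<^sup>+ y. ennreal (norm (indicator I y *\<^sub>R (cnj (g y x) * z y))) \<partial>lborel)"
        unfolding K_def set_lebesgue_integral_def by (rule integral_norm_bound_ennreal[OF True])
      also have "\<dots> = (\<integral>\<^sup>+ y. ennreal (indicator I y * cmod (g y x)) * ennreal (indicator I y * cmod (z y)) \<partial>lborel)"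
        by (intro nn_integral_cong) (auto simp: indicator_def norm_mult ennreal_mult[symmetric])
      finally show ?thesis .
    next
      case False
      then have "K x = 0" unfolding K_def set_lebesgue_integral_def by (rule not_integrable_integral_eq)
      then show ?thesis by simp
    qed
    have "(ennreal (cmod (K x)))\<^sup>2 \<le> (\<integral>\<^sup>+ y. ennreal (indicator I y * cmod (g y x)) * ennreal (indicator I y * cmod (z y)) \<partial>lborel)\<^sup>2"
      using b1 by (rule power_mono) simp
    also have "\<dots> \<le> (\<integral>\<^sup>+ y. (ennreal (indicator I y * cmod (g y x)))^2 \<partial>lborel) * (\<integral>\<^sup>+ y. (ennreal (indicator I y * cmod (z y)))^2 \<partial>lborel)"
      by (rule Cauchy_Schwarz_nn_integral) (unfold I_def, measurable)
    also have "\<dots> = A x * Z"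
      unfolding A_def Z_def
      by (intro arg_cong2[where f="(*)"] nn_integral_cong) (auto simp: indicator_def ennreal_power)
    finally have "ennreal ((cmod (K x))\<^sup>2) \<le> A x * Z" by (simp add: ennreal_power)
    then show ?thesis by (cases "x \<in> I") (auto simp: indicator_def)
  qed
  have "(\<integral>\<^sup>+ x. ennreal (indicator I x * (cmod (K x))\<^sup>2) \<partial>lborel) \<le> (\<integral>\<^sup>+ x. ennreal (indicator I x) * A x * Z \<partial>lborel)"
    by (intro nn_integral_mono) (use pw in \<open>simp add: mult.assoc\<close>)
  also have "\<dots> = (\<integral>\<^sup>+ x. ennreal (indicator I x) * A x \<partial>lborel) * Z"
    by (rule nn_integral_multc) (unfold A_def I_def, measurable)
  finally have bound: "(\<integral>\<^sup>+ x. ennreal (indicator I x * (cmod (K x))\<^sup>2) \<partial>lborel) \<le> (\<integral>\<^sup>+ x. ennreal (indicator I x) * A x \<partial>lborel) * Z" .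
  have "(\<integral>\<^sup>+ x. ennreal (indicator I x) * A x \<partial>lborel)
      = (\<integral>\<^sup>+ x. (\<integral>\<^sup>+ y. ennreal (indicator (I \<times> I) (y, x) * (cmod (g y x))\<^sup>2) \<partial>lborel) \<partial>lborel)"
  proof (intro nn_integral_cong)
    fix x
    have "ennreal (indicator I x) * A x = (\<integral>\<^sup>+ y. ennreal (indicator I x) * ennreal (indicator I y * (cmod (g y x))\<^sup>2) \<partial>lborel)"
      unfolding A_def by (rule nn_integral_cmult[symmetric]) (unfold I_def, measurable)
    also have "\<dots> = (\<integral>\<^sup>+ y. ennreal (indicator (I \<times> I) (y, x) * (cmod (g y x))\<^sup>2) \<partial>lborel)"
      by (intro nn_integral_cong) (auto simp: indicator_def)
    finally show "ennreal (indicator I x) * A x = (\<integral>\<^sup>+ y. ennreal (indicator (I \<times> I) (y, x) * (cmod (g y x))\<^sup>2) \<partial>lborel)" .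
  qed
  also have "\<dots> = (\<integral>\<^sup>+ p. ennreal (indicator (I \<times> I) p * (cmod (g (fst p) (snd p)))\<^sup>2) \<partial>(lborel \<Otimes>\<^sub>M lborel))"
  proof -
    have m: "(\<lambda>p. ennreal (indicator (I \<times> I) p * (cmod (g (fst p) (snd p)))\<^sup>2)) \<in> borel_measurable (lborel \<Otimes>\<^sub>M lborel)"
    proof -
      have gm': "(\<lambda>p. g (fst p) (snd p)) \<in> borel_measurable (lborel \<Otimes>\<^sub>M lborel)"
        using gm by (simp add: case_prod_beta')
      show ?thesis unfolding I_def using gm' by measurable
    qed
    show ?thesis using lborel_pair.nn_integral_snd[OF m] by simp
  qed
  also have "\<dots> < \<infinity>"
  proof -
    have "integrable (lborel \<Otimes>\<^sub>M lborel) (\<lambda>p. indicator (I \<times> I) p *\<^sub>R (case p of (x, y) \<Rightarrow> (cmod (g x y))\<^sup>2))"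
      using gi unfolding set_integrable_def I_def .
    then have "(\<integral>\<^sup>+ p. ennreal (norm (indicator (I \<times> I) p *\<^sub>R (case p of (x, y) \<Rightarrow> (cmod (g x y))\<^sup>2))) \<partial>(lborel \<Otimes>\<^sub>M lborel)) < \<infinity>"
      by (simp add: integrable_iff_bounded)
    moreover have "(\<integral>\<^sup>+ p. ennreal (norm (indicator (I \<times> I) p *\<^sub>R (case p of (x, y) \<Rightarrow> (cmod (g x y))\<^sup>2))) \<partial>(lborel \<Otimes>\<^sub>M lborel))
       = (\<integral>\<^sup>+ p. ennreal (indicator (I \<times> I) p * (cmod (g (fst p) (snd p)))\<^sup>2) \<partial>(lborel \<Otimes>\<^sub>M lborel))"
      by (intro nn_integral_cong) (auto simp: indicator_def split: prod.splits)
    ultimately show ?thesis by simp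
  qed
  finally have Xf: "(\<integral>\<^sup>+ x. ennreal (indicator I x) * A x \<partial>lborel) < \<infinity>" .
  have fin: "(\<integral>\<^sup>+ x. ennreal (indicator I x * (cmod (K x))\<^sup>2) \<partial>lborel) < \<infinity>"
  proof -
    have "(\<integral>\<^sup>+ x. ennreal (indicator I x) * A x \<partial>lborel) * Z < \<infinity>"
      using Xf Zf by (simp add: ennreal_mult_less_top)
    then show ?thesis using bound by (rule le_less_trans[rotated])
  qed
  have "integrable lborel (\<lambda>x. indicator I x *\<^sub>R (cmod (K x))\<^sup>2)"
  proof (subst integrable_iff_bounded, intro conjI)
    show "(\<lambda>x. indicator I x *\<^sub>R (cmod (K x))\<^sup>2) \<in> borel_measurable lborel"
      using Km unfolding I_def by measurable
    show "(\<integral>\<^sup>+ x. ennreal (norm (indicator I x *\<^sub>R (cmod (K x))\<^sup>2)) \<partial>lborel) < \<infinity>"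
      using fin by (simp add: indicator_def)
  qed
  then show ?thesis using Km unfolding L2_def set_integrable_def K_def I_def by simp
qed



lemma sum_fun_apply': "finite A \<Longrightarrow> (\<Sum>i\<in>A. h i) x = (\<Sum>i\<in>A. h i x)"
  for h :: "'i \<Rightarrow> 'a \<Rightarrow> 'b::comm_monoid_add"
  by (induction A rule: finite_induct) (auto simp: zero_fun_def)

lemma fun_vs: "vector_space (\<lambda>(c::'k::field) (f::'a \<Rightarrow> 'k) x. c * f x)"
  by unfold_locales (auto simp: fun_eq_iff algebra_simps)

lemma lin_dep:
  fixes F :: "('a \<Rightarrow> complex) set" and r :: "nat \<Rightarrow> 'a \<Rightarrow> complex"
  assumes F: "finite F" and rep: "\<And>i. \<exists>c. r i = (\<lambda>x. \<Sum>f\<in>F. c f * f x)" and n: "card F \<le> n"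
  shows "\<exists>a. (\<exists>i\<le>n. a i \<noteq> 0) \<and> (\<forall>x. (\<Sum>i\<le>n. a i * r i x) = 0)"
proof -
  interpret fv: vector_space "\<lambda>(c::complex) (f::'a \<Rightarrow> complex) x. c * f x" by (rule fun_vs)
  have sp: "r i \<in> fv.span F" for i
  proof -
    obtain c where c: "r i = (\<lambda>x. \<Sum>f\<in>F. c f * f x)" using rep by blast
    have "r i = (\<Sum>f\<in>F. (\<lambda>x. c f * f x))" unfolding c using F by (simp add: fun_eq_iff sum_fun_apply')
    also have "\<dots> \<in> fv.span F"
      by (intro fv.span_sum) (metis (no_types) fv.span_base fv.span_scale)
    finally show ?thesis .
  qed
  show ?thesis
  proof (cases "inj_on r {..n}")
    case False
    then obtain i j where ij: "i \<le> n" "j \<le> n" "i \<noteq> j" "r i = r j" unfolding inj_on_def by auto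
    define a where "a = (\<lambda>k. if k = i then (1::complex) else if k = j then -1 else 0)"
    have "(\<Sum>k\<le>n. a k * r k x) = 0" for x
    proof -
      have "(\<Sum>k\<le>n. a k * r k x) = (\<Sum>k\<in>{i,j}. a k * r k x)"
        by (rule sum.mono_neutral_right) (use ij in \<open>auto simp: a_def\<close>)
      also have "\<dots> = 0" using ij by (simp add: a_def)
      finally show ?thesis .
    qed
    moreover have "a i \<noteq> 0" by (simp add: a_def)
    ultimately show ?thesis using ij by blast
  next
    case True
    define V where "V = r ` {..n}"
    have cV: "card V = Suc n" unfolding V_def using card_image[OF True] by simp
    have fV: "finite V" unfolding V_def by simp
    have "\<not> fv.independent V"
    proof
      assume "fv.independent V"
      moreover have "V \<subseteq> fv.span F" using sp unfolding V_def by auto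
      ultimately have "card V \<le> card F" using fv.independent_span_bound[OF F] by blast
      with cV n show False by simp
    qed
    then obtain u where u: "\<exists>v\<in>V. u v \<noteq> 0" "(\<Sum>v\<in>V. (\<lambda>x. u v * v x)) = 0"
      using fv.dependent_finite[OF fV] by blast
    define a where "a = (\<lambda>k. u (r k))"
    have "(\<Sum>k\<le>n. a k * r k x) = 0" for x
    proof -
      have "(\<Sum>k\<le>n. a k * r k x) = (\<Sum>v\<in>V. u v * v x)"
        unfolding V_def a_def by (subst sum.reindex[OF True]) simp
      also have "\<dots> = (\<Sum>v\<in>V. (\<lambda>x. u v * v x)) x" using fV by (simp add: sum_fun_apply')
      also have "\<dots> = 0" using u(2) by (simp add: zero_fun_def)
      finally show ?thesis .
    qed
    moreover have "\<exists>i\<le>n. a i \<noteq> 0" using u(1) unfolding V_def a_def by auto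
    ultimately show ?thesis by blast
  qed
qed




definition gok :: "real \<Rightarrow> (real \<Rightarrow> real \<Rightarrow> complex) \<Rightarrow> bool" where
  "gok L g \<longleftrightarrow> (\<lambda>(x, y). g x y) \<in> borel_measurable (lborel \<Otimes>\<^sub>M lborel) \<and>
     set_integrable (lborel \<Otimes>\<^sub>M lborel) ({0<..<L} \<times> {0<..<L}) (\<lambda>(x, y). (cmod (g x y))\<^sup>2)"

definition Kop :: "real \<Rightarrow> (real \<Rightarrow> real \<Rightarrow> complex) \<Rightarrow> (real \<Rightarrow> complex) \<Rightarrow> real \<Rightarrow> complex" where
  "Kop L g z = (\<lambda>x. LINT y:{0<..<L}|lborel. cnj (g y x) * z y)"

lemma As_Kop: "As L g z = (\<lambda>x. (-1) * dz L z x + 1 * Kop L g z x)"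
  by (simp add: As_def Kop_def)

lemma gok_gx: assumes "gok L g" shows "(\<lambda>y. g y x) \<in> borel_measurable lborel"
proof -
  have gm: "(\<lambda>(x, y). g x y) \<in> borel_measurable (lborel \<Otimes>\<^sub>M lborel)" using assms by (simp add: gok_def)
  have "(\<lambda>y. (\<lambda>(a, b). g a b) (y, x)) \<in> borel_measurable lborel"
    by (rule measurable_compose[OF _ gm]) measurable
  then show ?thesis by simp
qed

lemma Kop_L2: "gok L g \<Longrightarrow> z \<in> L2 L \<Longrightarrow> Kop L g z \<in> L2 L"
  unfolding gok_def Kop_def using K_L2 by blast

lemma g_fin: assumes g: "gok L g"
  shows "AE x in lborel. x \<in> {0<..<L} \<longrightarrow> (\<lambda>y. cnj (g y x)) \<in> L2 L"
proof -
  define I where "I = {0<..<L}"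
  have gm: "(\<lambda>(x, y). g x y) \<in> borel_measurable (lborel \<Otimes>\<^sub>M lborel)" using g by (simp add: gok_def)
  have gi: "set_integrable (lborel \<Otimes>\<^sub>M lborel) (I \<times> I) (\<lambda>(x, y). (cmod (g x y))\<^sup>2)"
    using g by (simp add: gok_def I_def)
  have gx[measurable]: "(\<lambda>y. g y x) \<in> borel_measurable lborel" for x by (rule gok_gx[OF g])
  have gm': "(\<lambda>p. g (fst p) (snd p)) \<in> borel_measurable (lborel \<Otimes>\<^sub>M lborel)"
    using gm by (simp add: case_prod_beta')
  define A where "A = (\<lambda>x. \<integral>\<^sup>+ y. ennreal (indicator I y * (cmod (g y x))\<^sup>2) \<partial>lborel)"
  have Am: "(\<lambda>x. ennreal (indicator I x) * A x) \<in> borel_measurable lborel"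
  proof -
    have gs: "(\<lambda>p. g (snd p) (fst p)) \<in> borel_measurable (lborel \<Otimes>\<^sub>M lborel)"
    proof -
      have "(\<lambda>p. (\<lambda>(x, y). g x y) (snd p, fst p)) \<in> borel_measurable (lborel \<Otimes>\<^sub>M lborel)"
        by (rule measurable_compose[OF _ gm]) measurable
      then show ?thesis by simp
    qed
    have m: "(\<lambda>p. ennreal (indicator I (snd p) * indicator I (fst p) * (cmod (g (snd p) (fst p)))\<^sup>2)) \<in> borel_measurable (lborel \<Otimes>\<^sub>M lborel)"
      unfolding I_def using gs by measurable
    have "(\<lambda>x. \<integral>\<^sup>+ y. ennreal (indicator I y * indicator I x * (cmod (g y x))\<^sup>2) \<partial>lborel) \<in> borel_measurable lborel"
      using lborel.borel_measurable_nn_integral_fst[OF m] by simp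
    moreover have "(\<lambda>x. \<integral>\<^sup>+ y. ennreal (indicator I y * indicator I x * (cmod (g y x))\<^sup>2) \<partial>lborel) = (\<lambda>x. ennreal (indicator I x) * A x)"
    proof
      fix x
      have "ennreal (indicator I x) * A x = (\<integral>\<^sup>+ y. ennreal (indicator I x) * ennreal (indicator I y * (cmod (g y x))\<^sup>2) \<partial>lborel)"
        unfolding A_def by (rule nn_integral_cmult[symmetric]) (unfold I_def, measurable)
      also have "\<dots> = (\<integral>\<^sup>+ y. ennreal (indicator I y * indicator I x * (cmod (g y x))\<^sup>2) \<partial>lborel)"
        by (intro nn_integral_cong) (auto simp: indicator_def)
      finally show "(\<integral>\<^sup>+ y. ennreal (indicator I y * indicator I x * (cmod (g y x))\<^sup>2) \<partial>lborel) = ennreal (indicator I x) * A x" ..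
    qed
    ultimately show ?thesis by simp
  qed
  have "(\<integral>\<^sup>+ x. ennreal (indicator I x) * A x \<partial>lborel)
      = (\<integral>\<^sup>+ x. (\<integral>\<^sup>+ y. ennreal (indicator (I \<times> I) (y, x) * (cmod (g y x))\<^sup>2) \<partial>lborel) \<partial>lborel)"
  proof (intro nn_integral_cong)
    fix x
    have "ennreal (indicator I x) * A x = (\<integral>\<^sup>+ y. ennreal (indicator I x) * ennreal (indicator I y * (cmod (g y x))\<^sup>2) \<partial>lborel)"
      unfolding A_def by (rule nn_integral_cmult[symmetric]) (unfold I_def, measurable)
    also have "\<dots> = (\<integral>\<^sup>+ y. ennreal (indicator (I \<times> I) (y, x) * (cmod (g y x))\<^sup>2) \<partial>lborel)"
      by (intro nn_integral_cong) (auto simp: indicator_def)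
    finally show "ennreal (indicator I x) * A x = (\<integral>\<^sup>+ y. ennreal (indicator (I \<times> I) (y, x) * (cmod (g y x))\<^sup>2) \<partial>lborel)" .
  qed
  also have "\<dots> = (\<integral>\<^sup>+ p. ennreal (indicator (I \<times> I) p * (cmod (g (fst p) (snd p)))\<^sup>2) \<partial>(lborel \<Otimes>\<^sub>M lborel))"
  proof -
    have m: "(\<lambda>p. ennreal (indicator (I \<times> I) p * (cmod (g (fst p) (snd p)))\<^sup>2)) \<in> borel_measurable (lborel \<Otimes>\<^sub>M lborel)"
      unfolding I_def using gm' by measurable
    show ?thesis using lborel_pair.nn_integral_snd[OF m] by simp
  qed
  also have "\<dots> < \<infinity>"
  proof -
    have "integrable (lborel \<Otimes>\<^sub>M lborel) (\<lambda>p. indicator (I \<times> I) p *\<^sub>R (case p of (x, y) \<Rightarrow> (cmod (g x y))\<^sup>2))"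
      using gi unfolding set_integrable_def .
    then have "(\<integral>\<^sup>+ p. ennreal (norm (indicator (I \<times> I) p *\<^sub>R (case p of (x, y) \<Rightarrow> (cmod (g x y))\<^sup>2))) \<partial>(lborel \<Otimes>\<^sub>M lborel)) < \<infinity>"
      by (simp add: integrable_iff_bounded)
    moreover have "(\<integral>\<^sup>+ p. ennreal (norm (indicator (I \<times> I) p *\<^sub>R (case p of (x, y) \<Rightarrow> (cmod (g x y))\<^sup>2))) \<partial>(lborel \<Otimes>\<^sub>M lborel))
       = (\<integral>\<^sup>+ p. ennreal (indicator (I \<times> I) p * (cmod (g (fst p) (snd p)))\<^sup>2) \<partial>(lborel \<Otimes>\<^sub>M lborel))"
      by (intro nn_integral_cong) (auto simp: indicator_def split: prod.splits)
    ultimately show ?thesis by simp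
  qed
  finally have Xf: "(\<integral>\<^sup>+ x. ennreal (indicator I x) * A x \<partial>lborel) \<noteq> \<infinity>" by simp
  have "AE x in lborel. ennreal (indicator I x) * A x \<noteq> \<infinity>"
    by (rule nn_integral_noteq_infinite[OF Am Xf])
  then show ?thesis
  proof eventually_elim
    case (elim x)
    show ?case
    proof
      assume x: "x \<in> {0<..<L}"
      hence Af: "A x < \<infinity>" using elim by (simp add: I_def top.not_eq_extremum)
      have "integrable lborel (\<lambda>y. indicator I y *\<^sub>R (cmod (cnj (g y x)))\<^sup>2)"
      proof (subst integrable_iff_bounded, intro conjI)
        show "(\<lambda>y. indicator I y *\<^sub>R (cmod (cnj (g y x)))\<^sup>2) \<in> borel_measurable lborel"
          unfolding I_def by measurable
        show "(\<integral>\<^sup>+ y. ennreal (norm (indicator I y *\<^sub>R (cmod (cnj (g y x)))\<^sup>2)) \<partial>lborel) < \<infinity>"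
          using Af unfolding A_def by (simp add: indicator_def)
      qed
      then show "(\<lambda>y. cnj (g y x)) \<in> L2 L"
        unfolding L2_def set_integrable_def I_def by simp
    qed
  qed
qed



lemma dz_spec: "DAs L z \<Longrightarrow> is_deriv0 L z (dz L z)"
  unfolding DAs_def dz_def by (metis someI)

lemma dz_L2: "DAs L z \<Longrightarrow> dz L z \<in> L2 L"
  using dz_spec[of L z] by (simp add: is_deriv0_def)

lemma DAs_L2: "DAs L z \<Longrightarrow> z \<in> L2 L" by (simp add: DAs_def)

lemma deriv_lin: assumes "0 < L" "is_deriv0 L z1 w1" "is_deriv0 L z2 w2"
  shows "is_deriv0 L (\<lambda>x. a * z1 x + b * z2 x) (\<lambda>x. a * w1 x + b * w2 x)"
proof -
  have w: "w1 \<in> L2 L" "w2 \<in> L2 L" using assms by (auto simp: is_deriv0_def)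
  have "AE x in lborel. x \<in> {0<..<L} \<longrightarrow> a * z1 x + b * z2 x = (LINT t:{0..x}|lborel. a * w1 t + b * w2 t)"
  proof -
    have ae1: "AE x in lborel. x \<in> {0<..<L} \<longrightarrow> z1 x = (LINT t:{0..x}|lborel. w1 t)"
      using assms(2) unfolding is_deriv0_def by blast
    have ae2: "AE x in lborel. x \<in> {0<..<L} \<longrightarrow> z2 x = (LINT t:{0..x}|lborel. w2 t)"
      using assms(3) unfolding is_deriv0_def by blast
    show ?thesis using ae1 ae2
  proof (eventually_elim)
    case (elim x)
    show ?case
    proof
    assume x: "x \<in> {0<..<L}"
    have i1: "set_integrable lborel {0..x} w1" "set_integrable lborel {0..x} w2"
      using x by (auto intro!: L2_int_sub w)
    have "(LINT t:{0..x}|lborel. a * w1 t + b * w2 t) = a * (LINT t:{0..x}|lborel. w1 t) + b * (LINT t:{0..x}|lborel. w2 t)"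
      using i1 by (subst set_integral_add) auto
    then show "a * z1 x + b * z2 x = (LINT t:{0..x}|lborel. a * w1 t + b * w2 t)" using elim x by simp
  qed
  qed
  qed
  then show ?thesis using L2_lin[OF w] by (simp add: is_deriv0_def)
qed

lemma deriv_unique: assumes L: "0 < L" and d1: "is_deriv0 L z1 w1" and d2: "is_deriv0 L z2 w2"
  and e: "aeq L z1 z2" shows "aeq L w1 w2"
proof -
  have d: "is_deriv0 L (\<lambda>x. 1 * z1 x + (-1) * z2 x) (\<lambda>x. 1 * w1 x + (-1) * w2 x)"
    by (rule deriv_lin[OF L d1 d2])
  have "aeq L (\<lambda>x. 1 * w1 x + (-1) * w2 x) (\<lambda>_. 0)"
  proof (rule deriv_zero[OF L])
    show "(\<lambda>x. 1 * w1 x + (-1) * w2 x) \<in> L2 L" using d by (simp add: is_deriv0_def)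
    show "AE x in lborel. x \<in> {0<..<L} \<longrightarrow> (LINT t:{0..x}|lborel. 1 * w1 t + (-1) * w2 t) = 0"
    proof -
      have ae1: "AE x in lborel. x \<in> {0<..<L} \<longrightarrow> 1 * z1 x + (-1) * z2 x = (LINT t:{0..x}|lborel. 1 * w1 t + (-1) * w2 t)"
        using d unfolding is_deriv0_def by blast
      show ?thesis using ae1 e unfolding aeq_def by eventually_elim auto
    qed
  qed
  then show ?thesis unfolding aeq_def by eventually_elim auto
qed

lemma dz_cong: "0 < L \<Longrightarrow> DAs L z1 \<Longrightarrow> DAs L z2 \<Longrightarrow> aeq L z1 z2 \<Longrightarrow> aeq L (dz L z1) (dz L z2)"
  by (rule deriv_unique[OF _ dz_spec dz_spec])

lemma dz_lin: assumes L: "0 < L" and z: "DAs L z1" "DAs L z2"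
  shows "DAs L (\<lambda>x. a * z1 x + b * z2 x)"
    "aeq L (dz L (\<lambda>x. a * z1 x + b * z2 x)) (\<lambda>x. a * dz L z1 x + b * dz L z2 x)"
proof -
  have d: "is_deriv0 L (\<lambda>x. a * z1 x + b * z2 x) (\<lambda>x. a * dz L z1 x + b * dz L z2 x)"
    by (rule deriv_lin[OF L dz_spec[OF z(1)] dz_spec[OF z(2)]])
  show D: "DAs L (\<lambda>x. a * z1 x + b * z2 x)"
    unfolding DAs_def using d L2_lin[OF DAs_L2[OF z(1)] DAs_L2[OF z(2)]] by blast
  show "aeq L (dz L (\<lambda>x. a * z1 x + b * z2 x)) (\<lambda>x. a * dz L z1 x + b * dz L z2 x)"
    by (rule deriv_unique[OF L dz_spec[OF D] d aeq_refl])
qed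

lemma dz_zero: assumes L: "0 < L" and z: "DAs L z" and e: "aeq L z (\<lambda>_. 0)"
  shows "aeq L (dz L z) (\<lambda>_. 0)"
proof -
  have "is_deriv0 L (\<lambda>_. 0) (\<lambda>_. 0)"
    unfolding is_deriv0_def L2_def by (simp add: set_integrable_def)
  then show ?thesis by (rule deriv_unique[OF L dz_spec[OF z] _ e])
qed

lemma L2_cnj: "z \<in> L2 L \<Longrightarrow> (\<lambda>x. cnj (z x)) \<in> L2 L"
  unfolding L2_def by auto

lemma Kop_cong: assumes g: "gok L g" and z: "z1 \<in> L2 L" "z2 \<in> L2 L" and e: "aeq L z1 z2"
  shows "Kop L g z1 x = Kop L g z2 x"
  unfolding Kop_def
proof (rule set_lebesgue_integral_cong_AE)
  have [measurable]: "(\<lambda>y. g y x) \<in> borel_measurable lborel" by (rule gok_gx[OF g])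
  have [measurable]: "z1 \<in> borel_measurable lborel" "z2 \<in> borel_measurable lborel" using z by (auto simp: L2_def)
  show "(\<lambda>y. cnj (g y x) * z1 y) \<in> borel_measurable lborel" "(\<lambda>y. cnj (g y x) * z2 y) \<in> borel_measurable lborel"
    by measurable
  show "AE y\<in>{0<..<L} in lborel. cnj (g y x) * z1 y = cnj (g y x) * z2 y"
    using e unfolding aeq_def by eventually_elim auto
qed simp

lemma Kop_lin: assumes g: "gok L g" and z: "z1 \<in> L2 L" "z2 \<in> L2 L"
  shows "aeq L (Kop L g (\<lambda>x. a * z1 x + b * z2 x)) (\<lambda>x. a * Kop L g z1 x + b * Kop L g z2 x)"
  using g_fin[OF g] unfolding aeq_def
proof eventually_elim
  case (elim x)
  show ?case
  proof
    assume x: "x \<in> {0<..<L}"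
    have gL: "(\<lambda>y. cnj (g y x)) \<in> L2 L" using elim x by simp
    have i: "set_integrable lborel {0<..<L} (\<lambda>y. cnj (g y x) * z1 y)" "set_integrable lborel {0<..<L} (\<lambda>y. cnj (g y x) * z2 y)"
      using L2_prod[OF gL L2_cnj[OF z(1)]] L2_prod[OF gL L2_cnj[OF z(2)]] by simp_all
    have "Kop L g (\<lambda>x. a * z1 x + b * z2 x) x = (LINT y:{0<..<L}|lborel. a * (cnj (g y x) * z1 y) + b * (cnj (g y x) * z2 y))"
      unfolding Kop_def by (simp add: algebra_simps)
    also have "\<dots> = a * Kop L g z1 x + b * Kop L g z2 x"
      using i unfolding Kop_def by (subst set_integral_add) auto
    finally show "Kop L g (\<lambda>x. a * z1 x + b * z2 x) x = a * Kop L g z1 x + b * Kop L g z2 x" .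
  qed
qed

lemma As_L2: "gok L g \<Longrightarrow> DAs L z \<Longrightarrow> As L g z \<in> L2 L"
  unfolding As_Kop by (intro L2_lin dz_L2 Kop_L2 DAs_L2)

lemma As_cong: assumes L: "0 < L" and g: "gok L g" and z: "DAs L z1" "DAs L z2" and e: "aeq L z1 z2"
  shows "aeq L (As L g z1) (As L g z2)"
proof -
  have "aeq L (\<lambda>x. (-1) * dz L z1 x + 1 * Kop L g z1 x) (\<lambda>x. (-1) * dz L z2 x + 1 * Kop L g z2 x)"
    by (rule aeq_lin[OF dz_cong[OF L z e]]) (simp add: Kop_cong[OF g DAs_L2[OF z(1)] DAs_L2[OF z(2)] e] aeq_refl)
  then show ?thesis unfolding As_Kop .
qed

lemma As_lin: assumes L: "0 < L" and g: "gok L g" and z: "DAs L z1" "DAs L z2"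
  shows "aeq L (As L g (\<lambda>x. a * z1 x + b * z2 x)) (\<lambda>x. a * As L g z1 x + b * As L g z2 x)"
proof -
  have "aeq L (\<lambda>x. (-1) * dz L (\<lambda>x. a * z1 x + b * z2 x) x + 1 * Kop L g (\<lambda>x. a * z1 x + b * z2 x) x)
     (\<lambda>x. (-1) * (a * dz L z1 x + b * dz L z2 x) + 1 * (a * Kop L g z1 x + b * Kop L g z2 x))"
    by (rule aeq_lin[OF dz_lin(2)[OF L z] Kop_lin[OF g DAs_L2[OF z(1)] DAs_L2[OF z(2)]]])
  then show ?thesis unfolding As_Kop by (simp add: algebra_simps)
qed



lemma aeq_zero_DAs: assumes "z \<in> L2 L" "aeq L z (\<lambda>_. 0)" shows "DAs L z"
proof -
  have "is_deriv0 L z (\<lambda>_. 0)"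
    using assms(2) unfolding is_deriv0_def aeq_def L2_def by (simp add: set_integrable_def)
  then show ?thesis using assms(1) unfolding DAs_def by blast
qed

lemma aeq_zero_Bs: assumes L: "0 < L" and z: "DAs L z" and e: "aeq L z (\<lambda>_. 0)"
  shows "Bs L z = 0"
proof -
  have d: "is_deriv0 L z (dz L z)" by (rule dz_spec[OF z])
  have w: "dz L z \<in> L2 L" using d by (simp add: is_deriv0_def)
  have ae1: "AE x in lborel. x \<in> {0<..<L} \<longrightarrow> z x = (LINT t:{0..x}|lborel. dz L z t)"
    using d unfolding is_deriv0_def by blast
  have "AE x in lborel. x \<in> {0<..<L} \<longrightarrow> (LINT t:{0..x}|lborel. dz L z t) = 0"
    using ae1 e unfolding aeq_def by eventually_elim auto
  then have "(LINT t:{0..L}|lborel. dz L z t) = 0"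
    by (intro zero_cont[OF L2_int_cont[OF w] _ _ L]) (use L in auto)
  then show ?thesis by (simp add: Bs_def)
qed

lemma forward_iv:
  assumes L: "0 < L" and g: "gok L g" and P: "bounded_op L P" and Ps: "is_adjoint L P Ps"
    and h6: "\<forall>z. DAs L z \<longrightarrow> DAs L (Ps z)"
    and h7: "\<forall>z\<in>kerBs L. aeq L (\<lambda>x. A0s L (Ps z) x - Ps (As L g z) x) (\<lambda>_. 0)"
    and z: "z \<in> kerBs L" and e: "aeq L (\<lambda>x. lam * z x - As L g z x) (\<lambda>_. 0)"
  shows "aeq L (Ps z) (\<lambda>_. 0)"
proof -
  have zD: "DAs L z" using z by (simp add: kerBs_def)
  have zL: "z \<in> L2 L" by (rule DAs_L2[OF zD])
  define w where "w = Ps z"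
  have wD: "DAs L w" using h6 zD by (simp add: w_def)
  have wL: "w \<in> L2 L" by (rule DAs_L2[OF wD])
  define d where "d = dz L w"
  have dd: "is_deriv0 L w d" unfolding d_def by (rule dz_spec[OF wD])
  have dL: "d \<in> L2 L" using dd by (simp add: is_deriv0_def)
  have AsL: "As L g z \<in> L2 L" by (rule As_L2[OF g zD])
  have lzL: "(\<lambda>x. lam * z x + 0 * z x) \<in> L2 L" by (rule L2_lin[OF zL zL])
  have e1: "aeq L (As L g z) (\<lambda>x. lam * z x + 0 * z x)"
    using e unfolding aeq_def by eventually_elim auto
  have e2: "aeq L (Ps (As L g z)) (Ps (\<lambda>x. lam * z x + 0 * z x))"
    by (rule adj_resp[OF P Ps AsL lzL e1])
  have e3: "aeq L (Ps (\<lambda>x. lam * z x + 0 * z x)) (\<lambda>x. lam * w x + 0 * w x)"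
    unfolding w_def by (rule adj_lin[OF P Ps zL zL])
  have e4: "aeq L (\<lambda>x. A0s L w x - Ps (As L g z) x) (\<lambda>_. 0)" using h7 z by (simp add: w_def)
  have ae1: "AE x in lborel. x \<in> {0<..<L} \<longrightarrow> w x = (LINT t:{0..x}|lborel. d t)"
    using dd unfolding is_deriv0_def by blast
  have ae: "AE x in lborel. x \<in> {0<..<L} \<longrightarrow> d x = (- lam) * (LINT t:{0..x}|lborel. d t)"
    using e2 e3 e4 ae1 unfolding aeq_def
  proof eventually_elim
    case (elim x)
    show ?case
    proof
      assume x: "x \<in> {0<..<L}"
      have "- d x = lam * (LINT t:{0..x}|lborel. d t)"
        using elim x by (auto simp: A0s_def d_def)
      then show "d x = (- lam) * (LINT t:{0..x}|lborel. d t)"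
        by (metis minus_minus mult_minus_left)
    qed
  qed
  have F0: "(LINT t:{0..x}|lborel. d t) = 0" if "x \<in> {0..L}" for x
    by (rule ode_zero[OF L dL ae that])
  show ?thesis
    using ae1 unfolding aeq_def w_def[symmetric]
  proof eventually_elim
    case (elim x)
    then show ?case using F0 by auto
  qed
qed



lemma aeq_sum: assumes "finite A" "\<And>i. i \<in> A \<Longrightarrow> aeq L (f i) (h i)"
  shows "aeq L (\<lambda>x. \<Sum>i\<in>A. c i * f i x) (\<lambda>x. \<Sum>i\<in>A. c i * h i x)"
proof -
  have "AE x in lborel. \<forall>i\<in>A. x \<in> {0<..<L} \<longrightarrow> f i x = h i x"
    using assms unfolding aeq_def by (subst AE_finite_all) auto
  then show ?thesis unfolding aeq_def by eventually_elim auto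
qed

locale bw =
  fixes L :: real and g :: "real \<Rightarrow> real \<Rightarrow> complex" and P Ps :: "(real \<Rightarrow> complex) \<Rightarrow> (real \<Rightarrow> complex)"
  assumes L: "0 < L" and g: "gok L g" and P: "bounded_op L P" and Ps: "is_adjoint L P Ps"
    and h7: "\<forall>z\<in>kerBs L. aeq L (\<lambda>x. A0s L (Ps z) x - Ps (As L g z) x) (\<lambda>_. 0)"
    and h6: "\<forall>z. DAs L z \<longrightarrow> DAs L (Ps z)"
    and i2: "kerop L Ps \<subseteq> kerBs L"
begin

lemma S_D: "z \<in> kerop L Ps \<Longrightarrow> DAs L z" using i2 by (auto simp: kerBs_def)
lemma S_L2: "z \<in> kerop L Ps \<Longrightarrow> z \<in> L2 L" by (simp add: kerop_def)

lemma S_lin: assumes "z1 \<in> kerop L Ps" "z2 \<in> kerop L Ps"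
  shows "(\<lambda>x. a * z1 x + b * z2 x) \<in> kerop L Ps"
proof -
  have zL: "z1 \<in> L2 L" "z2 \<in> L2 L" using assms by (auto simp: kerop_def)
  have "aeq L (Ps (\<lambda>x. a * z1 x + b * z2 x)) (\<lambda>x. a * Ps z1 x + b * Ps z2 x)"
    by (rule adj_lin[OF P Ps zL])
  moreover have "aeq L (\<lambda>x. a * Ps z1 x + b * Ps z2 x) (\<lambda>x. a * 0 + b * 0)"
    using assms by (intro aeq_lin) (auto simp: kerop_def)
  ultimately have "aeq L (Ps (\<lambda>x. a * z1 x + b * z2 x)) (\<lambda>_. 0)"
    by (auto intro: aeq_trans)
  then show ?thesis using L2_lin[OF zL] by (simp add: kerop_def)
qed

lemma S_zero: "(\<lambda>_. 0) \<in> kerop L Ps"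
proof -
  have z: "(\<lambda>_. 0) \<in> L2 L" unfolding L2_def by (simp add: set_integrable_def)
  have "aeq L (Ps (\<lambda>x. 0 * (0::complex) + 0 * 0)) (\<lambda>x. 0 * Ps (\<lambda>_. 0) x + 0 * Ps (\<lambda>_. 0) x)"
    by (rule adj_lin[OF P Ps z z])
  then show ?thesis using z by (simp add: kerop_def)
qed

lemma S_sum: "finite A \<Longrightarrow> (\<And>i. i \<in> A \<Longrightarrow> f i \<in> kerop L Ps) \<Longrightarrow> (\<lambda>x. \<Sum>i\<in>A. c i * f i x) \<in> kerop L Ps"
proof (induction A rule: finite_induct)
  case empty then show ?case using S_zero by simp
next
  case (insert j A)
  have "(\<lambda>x. c j * f j x + 1 * (\<Sum>i\<in>A. c i * f i x)) \<in> kerop L Ps"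
    using insert by (intro S_lin) auto
  then show ?case using insert by simp
qed

lemma S_As: assumes z: "z \<in> kerop L Ps" shows "As L g z \<in> kerop L Ps"
proof -
  have zD: "DAs L z" by (rule S_D[OF z])
  have zB: "z \<in> kerBs L" using z i2 by auto
  have AL: "As L g z \<in> L2 L" by (rule As_L2[OF g zD])
  have pD: "DAs L (Ps z)" using h6 zD by simp
  have p0: "aeq L (Ps z) (\<lambda>_. 0)" using z by (simp add: kerop_def)
  have d0: "aeq L (dz L (Ps z)) (\<lambda>_. 0)" by (rule dz_zero[OF L pD p0])
  have "aeq L (\<lambda>x. A0s L (Ps z) x - Ps (As L g z) x) (\<lambda>_. 0)" using h7 zB by simp
  then have "aeq L (Ps (As L g z)) (\<lambda>_. 0)"
    using d0 unfolding aeq_def A0s_def by eventually_elim auto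
  then show ?thesis using AL by (simp add: kerop_def)
qed

lemma S_pow: "z \<in> kerop L Ps \<Longrightarrow> (As L g ^^ i) z \<in> kerop L Ps"
  by (induction i) (auto intro: S_As)

lemma As_sum: "finite A \<Longrightarrow> (\<And>i. i \<in> A \<Longrightarrow> f i \<in> kerop L Ps) \<Longrightarrow>
  aeq L (As L g (\<lambda>x. \<Sum>i\<in>A. c i * f i x)) (\<lambda>x. \<Sum>i\<in>A. c i * As L g (f i) x)"
proof (induction A rule: finite_induct)
  case empty
  have D0: "DAs L (\<lambda>_. 0)" using S_D[OF S_zero] .
  have "aeq L (As L g (\<lambda>x. 0 * 0 + 0 * 0)) (\<lambda>x. 0 * As L g (\<lambda>_. 0) x + 0 * As L g (\<lambda>_. 0) x)"
    by (rule As_lin[OF L g D0 D0])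
  then show ?case by simp
next
  case (insert j A)
  have fj: "DAs L (f j)" using insert by (auto intro: S_D)
  have sA: "DAs L (\<lambda>x. \<Sum>i\<in>A. c i * f i x)" using insert by (auto intro!: S_D S_sum)
  have "aeq L (As L g (\<lambda>x. c j * f j x + 1 * (\<Sum>i\<in>A. c i * f i x)))
      (\<lambda>x. c j * As L g (f j) x + 1 * As L g (\<lambda>x. \<Sum>i\<in>A. c i * f i x) x)"
    by (rule As_lin[OF L g fj sA])
  moreover have "aeq L (\<lambda>x. c j * As L g (f j) x + 1 * As L g (\<lambda>x. \<Sum>i\<in>A. c i * f i x) x)
      (\<lambda>x. c j * As L g (f j) x + 1 * (\<Sum>i\<in>A. c i * As L g (f i) x))"
    using insert by (intro aeq_lin aeq_refl) auto
  ultimately show ?case using insert by (auto intro: aeq_trans)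
qed

definition papp :: "nat \<Rightarrow> complex poly \<Rightarrow> (real \<Rightarrow> complex) \<Rightarrow> real \<Rightarrow> complex" where
  "papp N p z = (\<lambda>x. \<Sum>i<N. coeff p i * (As L g ^^ i) z x)"

lemma papp_S: "z \<in> kerop L Ps \<Longrightarrow> papp N p z \<in> kerop L Ps"
  unfolding papp_def by (intro S_sum S_pow) auto

lemma papp_ext: assumes "degree p < N" shows "papp N p z = papp (Suc (degree p)) p z"
  unfolding papp_def
proof (intro ext sum.mono_neutral_right)
  show "\<forall>i\<in>{..<N} - {..<Suc (degree p)}. coeff p i * (As L g ^^ i) z x = 0" for x
    by (auto simp: coeff_eq_0)
qed (use assms in auto)

lemma papp_mult: assumes z: "z \<in> kerop L Ps" and N: "degree q < N"
  shows "aeq L (papp (Suc N) ([:-a, 1:] * q) z) (\<lambda>x. As L g (papp N q z) x - a * papp N q z x)"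
proof -
  define T where "T = (\<lambda>i. (As L g ^^ i) z)"
  have cf: "coeff ([:-a, 1:] * q) i = - a * coeff q i + (case i of 0 \<Rightarrow> 0 | Suc j \<Rightarrow> coeff q j)" for i
    by (simp add: coeff_pCons split: nat.splits)
  have lhs: "papp (Suc N) ([:-a, 1:] * q) z x = (\<Sum>i<N. coeff q i * T (Suc i) x) - a * (\<Sum>i<N. coeff q i * T i x)" for x
  proof -
    have "papp (Suc N) ([:-a, 1:] * q) z x = (\<Sum>i<Suc N. (- a * coeff q i) * T i x + (case i of 0 \<Rightarrow> 0 | Suc j \<Rightarrow> coeff q j) * T i x)"
      unfolding papp_def T_def by (intro sum.cong refl) (subst cf, simp only: distrib_right)
    also have "\<dots> = (\<Sum>i<Suc N. (- a * coeff q i) * T i x) + (\<Sum>i<Suc N. (case i of 0 \<Rightarrow> 0 | Suc j \<Rightarrow> coeff q j) * T i x)"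
      by (rule sum.distrib)
    also have "(\<Sum>i<Suc N. (- a * coeff q i) * T i x) = - a * (\<Sum>i<N. coeff q i * T i x)"
      using N by (simp add: coeff_eq_0 sum_distrib_left mult.assoc)
    also have "(\<Sum>i<Suc N. (case i of 0 \<Rightarrow> 0 | Suc j \<Rightarrow> coeff q j) * T i x) = (\<Sum>i<N. coeff q i * T (Suc i) x)"
      by (subst sum.lessThan_Suc_shift) simp
    finally show ?thesis by simp
  qed
  have TS: "T i \<in> kerop L Ps" for i unfolding T_def by (rule S_pow[OF z])
  have pq: "papp N q z = (\<lambda>x. \<Sum>i<N. coeff q i * T i x)" by (simp add: papp_def T_def)
  have "aeq L (As L g (\<lambda>x. \<Sum>i<N. coeff q i * T i x)) (\<lambda>x. \<Sum>i<N. coeff q i * As L g (T i) x)"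
    by (rule As_sum) (auto intro: TS)
  then have "aeq L (As L g (papp N q z)) (\<lambda>x. \<Sum>i<N. coeff q i * As L g (T i) x)"
    by (simp only: pq)
  moreover have "As L g (T i) = T (Suc i)" for i by (simp add: T_def)
  ultimately have e: "aeq L (As L g (papp N q z)) (\<lambda>x. \<Sum>i<N. coeff q i * T (Suc i) x)" by simp
  have lhs': "papp (Suc N) ([:-a, 1:] * q) z = (\<lambda>x. (\<Sum>i<N. coeff q i * T (Suc i) x) - a * papp N q z x)"
    using lhs pq by (simp add: fun_eq_iff)
  have fin: "aeq L (\<lambda>x. 1 * (\<Sum>i<N. coeff q i * T (Suc i) x) + (- a) * papp N q z x)
     (\<lambda>x. 1 * As L g (papp N q z) x + (- a) * papp N q z x)"
    by (rule aeq_lin[OF aeq_sym[OF e] aeq_refl])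
  then show ?thesis unfolding lhs' by simp
qed

end



context bw begin

lemma main_ind:
  assumes iv: "\<forall>lam::complex. \<forall>z\<in>kerBs L. aeq L (\<lambda>x. lam * z x - As L g z x) (\<lambda>_. 0) \<longrightarrow> aeq L z (\<lambda>_. 0)"
  shows "p \<noteq> 0 \<Longrightarrow> y \<in> kerop L Ps \<Longrightarrow> aeq L (papp (Suc (degree p)) p y) (\<lambda>_. 0) \<Longrightarrow> aeq L y (\<lambda>_. 0)"
proof (induction "degree p" arbitrary: p y rule: less_induct)
  case less
  show ?case
  proof (cases "degree p = 0")
    case True
    then obtain c where p: "p = [:c:]" by (metis degree_eq_zeroE)
    have c: "c \<noteq> 0" using less.prems(1) p by simp
    have "papp (Suc (degree p)) p y = (\<lambda>x. c * y x)" by (simp add: papp_def p)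
    then have "aeq L (\<lambda>x. c * y x) (\<lambda>_. 0)" using less.prems(3) by simp
    then show ?thesis unfolding aeq_def
    proof eventually_elim
      case (elim x) then show ?case using c by auto
    qed
  next
    case False
    have "\<not> constant (poly p)" using False by (simp add: constant_degree)
    then obtain a where "poly p a = 0" using fundamental_theorem_of_algebra by blast
    then have "[:-a, 1:] dvd p" by (simp add: poly_eq_0_iff_dvd)
    then obtain q where pq: "p = [:-a, 1:] * q" by (auto elim: dvdE)
    have q0: "q \<noteq> 0" using less.prems(1) pq by auto
    have dm: "degree p = degree [:-a, 1:] + degree q" unfolding pq by (rule degree_mult_eq) (use q0 in auto)
    have d1: "degree [:-a, 1:] = (1::nat)" by simp
    have dp: "degree p = Suc (degree q)" using dm d1 by arith
    define u where "u = papp (Suc (degree q)) q y"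
    have uS: "u \<in> kerop L Ps" unfolding u_def by (rule papp_S[OF less.prems(2)])
    have m: "aeq L (papp (Suc (Suc (degree q))) ([:-a, 1:] * q) y) (\<lambda>x. As L g u x - a * u x)"
      unfolding u_def by (rule papp_mult[OF less.prems(2)]) simp
    have e1: "aeq L (papp (Suc (Suc (degree q))) ([:-a, 1:] * q) y) (\<lambda>_. 0)"
    proof -
      have eqp: "papp (Suc (Suc (degree q))) ([:-a, 1:] * q) y = papp (Suc (degree p)) p y"
        by (simp only: pq[symmetric] dp)
      show ?thesis using less.prems(3) by (simp only: eqp)
    qed
    have "aeq L (\<lambda>x. As L g u x - a * u x) (\<lambda>_. 0)"
      by (rule aeq_trans[OF aeq_sym[OF m] e1])
    then have "aeq L (\<lambda>x. a * u x - As L g u x) (\<lambda>_. 0)"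
      unfolding aeq_def by eventually_elim (auto simp: algebra_simps)
    then have "aeq L u (\<lambda>_. 0)" using iv uS i2 by blast
    then show ?thesis using less.hyps[of q y] dp q0 less.prems(2) by (simp add: u_def)
  qed
qed

lemma lin_step:
  assumes fd: "fin_dim L (kerop L Ps)" and y: "y \<in> kerop L Ps"
  shows "\<exists>p. p \<noteq> 0 \<and> aeq L (papp (Suc (degree p)) p y) (\<lambda>_. 0)"
proof -
  obtain F where F: "finite F" "F \<subseteq> kerop L Ps" "\<forall>z\<in>kerop L Ps. \<exists>c. aeq L z (\<lambda>x. \<Sum>f\<in>F. c f * f x)"
    using fd unfolding fin_dim_def by blast
  define n where "n = card F"
  define T where "T = (\<lambda>i. (As L g ^^ i) y)"
  have ex: "\<exists>c. aeq L (T i) (\<lambda>x. \<Sum>f\<in>F. c f * f x)" for i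
    using F(3) S_pow[OF y] unfolding T_def by blast
  define C where "C = (\<lambda>i. SOME c. aeq L (T i) (\<lambda>x. \<Sum>f\<in>F. c f * f x))"
  have C: "aeq L (T i) (\<lambda>x. \<Sum>f\<in>F. C i f * f x)" for i
    unfolding C_def by (rule someI_ex[OF ex])
  define r where "r = (\<lambda>i x. \<Sum>f\<in>F. C i f * f x)"
  obtain a where a: "\<exists>i\<le>n. a i \<noteq> 0" "\<forall>x. (\<Sum>i\<le>n. a i * r i x) = 0"
    using lin_dep[OF F(1), of r n] unfolding r_def n_def by blast
  define p where "p = (\<Sum>i\<le>n. monom (a i) i)"
  have cp: "coeff p k = (if k \<le> n then a k else 0)" for k
    unfolding p_def by (simp add: coeff_sum coeff_monom)
  obtain i0 where i0: "i0 \<le> n" "a i0 \<noteq> 0" using a(1) by blast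
  have "coeff p i0 \<noteq> 0" using i0 cp by simp
  then have p0: "p \<noteq> 0" by auto
  have dp: "degree p < Suc n"
    using cp by (intro le_imp_less_Suc degree_le) auto
  have "papp (Suc n) p y = (\<lambda>x. \<Sum>i<Suc n. a i * T i x)"
    unfolding papp_def T_def by (intro ext sum.cong refl) (simp add: cp)
  moreover have "aeq L (\<lambda>x. \<Sum>i<Suc n. a i * T i x) (\<lambda>x. \<Sum>i<Suc n. a i * r i x)"
    by (rule aeq_sum) (auto simp: C r_def)
  moreover have "(\<lambda>x. \<Sum>i<Suc n. a i * r i x) = (\<lambda>_. 0)"
    using a(2) by (simp add: lessThan_Suc_atMost)
  ultimately have "aeq L (papp (Suc n) p y) (\<lambda>_. 0)" by simp
  then show ?thesis using p0 papp_ext[OF dp] by auto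
qed

end

lemma backward_dir:
  assumes L: "0 < L" and g: "gok L g" and P: "bounded_op L P" and Ps: "is_adjoint L P Ps"
    and h6: "\<forall>z. DAs L z \<longrightarrow> DAs L (Ps z)"
    and h7: "\<forall>z\<in>kerBs L. aeq L (\<lambda>x. A0s L (Ps z) x - Ps (As L g z) x) (\<lambda>_. 0)"
    and ii: "kerop L Ps \<subseteq> kerBs L" and iii: "fin_dim L (kerop L Ps)"
    and iv: "\<forall>lam::complex. \<forall>z\<in>kerBs L. aeq L (\<lambda>x. lam * z x - As L g z x) (\<lambda>_. 0) \<longrightarrow> aeq L z (\<lambda>_. 0)"
    and y: "y \<in> kerop L Ps"
  shows "aeq L y (\<lambda>_. 0)"
proof -
  interpret bw L g P Ps by (rule bw.intro[OF L g P Ps h7 h6 ii])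
  obtain p where p: "p \<noteq> 0" "aeq L (papp (Suc (degree p)) p y) (\<lambda>_. 0)"
    using lin_step[OF iii y] by blast
  show ?thesis by (rule main_ind[OF iv p(1) y p(2)])
qed

lemma forward_dir:
  assumes L: "0 < L" and g: "gok L g" and P: "bounded_op L P" and Ps: "is_adjoint L P Ps"
    and h6: "\<forall>z. DAs L z \<longrightarrow> DAs L (Ps z)"
    and h7: "\<forall>z\<in>kerBs L. aeq L (\<lambda>x. A0s L (Ps z) x - Ps (As L g z) x) (\<lambda>_. 0)"
    and H: "\<forall>z\<in>kerop L Ps. aeq L z (\<lambda>_. 0)"
  shows "(\<forall>z\<in>kerop L Ps. DAs L z) \<and> kerop L Ps \<subseteq> kerBs L \<and> fin_dim L (kerop L Ps) \<and>
      (\<forall>lam::complex. \<forall>z\<in>kerBs L. aeq L (\<lambda>x. lam * z x - As L g z x) (\<lambda>_. 0) \<longrightarrow> aeq L z (\<lambda>_. 0))"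
proof -
  have i: "\<forall>z\<in>kerop L Ps. DAs L z"
  proof
    fix z assume z: "z \<in> kerop L Ps"
    have zL: "z \<in> L2 L" using z unfolding kerop_def by blast
    have ze: "aeq L z (\<lambda>_. 0)" using H z by blast
    show "DAs L z" by (rule aeq_zero_DAs[OF zL ze])
  qed
  have ii: "kerop L Ps \<subseteq> kerBs L"
  proof
    fix z assume z: "z \<in> kerop L Ps"
    have zD: "DAs L z" using i z by blast
    have ze: "aeq L z (\<lambda>_. 0)" using H z by blast
    have "Bs L z = 0" by (rule aeq_zero_Bs[OF L zD ze])
    then show "z \<in> kerBs L" using zD unfolding kerBs_def by blast
  qed
  have iii: "fin_dim L (kerop L Ps)"
    unfolding fin_dim_def
  proof (intro exI conjI ballI)
    show "finite ({}::(real \<Rightarrow> complex) set)" by simp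
    show "({}::(real \<Rightarrow> complex) set) \<subseteq> kerop L Ps" by simp
    fix z assume z: "z \<in> kerop L Ps"
    have ze: "aeq L z (\<lambda>_. 0)" using H z by blast
    show "aeq L z (\<lambda>x. \<Sum>f\<in>({}::(real \<Rightarrow> complex) set). (\<lambda>_. 0) f * f x)"
      using ze by (simp only: sum.empty)
  qed
  have iv: "\<forall>lam::complex. \<forall>z\<in>kerBs L.
              aeq L (\<lambda>x. lam * z x - As L g z x) (\<lambda>_. 0) \<longrightarrow> aeq L z (\<lambda>_. 0)"
  proof (intro allI ballI impI)
    fix lam :: complex and z assume z: "z \<in> kerBs L" and e: "aeq L (\<lambda>x. lam * z x - As L g z x) (\<lambda>_. 0)"
    have p: "aeq L (Ps z) (\<lambda>_. 0)" by (rule forward_iv[OF L g P Ps h6 h7 z e])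
    have "DAs L z" using z unfolding kerBs_def by blast
    then have "z \<in> L2 L" unfolding DAs_def by blast
    then have "z \<in> kerop L Ps" using p unfolding kerop_def by blast
    then show "aeq L z (\<lambda>_. 0)" using H by blast
  qed
  show ?thesis using i ii iii iv by blast
qed

theorem lemma2:
  fixes L :: real and g :: "real \<Rightarrow> real \<Rightarrow> complex"
    and P Ps :: "(real \<Rightarrow> complex) \<Rightarrow> (real \<Rightarrow> complex)"
  assumes "L > 0"
    and "(\<lambda>(x, y). g x y) \<in> borel_measurable (lborel \<Otimes>\<^sub>M lborel)"
    and "set_integrable (lborel \<Otimes>\<^sub>M lborel) ({0<..<L} \<times> {0<..<L}) (\<lambda>(x, y). (cmod (g x y))\<^sup>2)"
    and "bounded_op L P"
    and "is_adjoint L P Ps"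
    and "\<forall>z. DAs L z \<longrightarrow> DAs L (Ps z)"
    and "\<forall>z\<in>kerBs L. aeq L (\<lambda>x. A0s L (Ps z) x - Ps (As L g z) x) (\<lambda>_. 0)"
  shows "(\<forall>z\<in>kerop L Ps. aeq L z (\<lambda>_. 0)) \<longleftrightarrow>
           ((\<forall>z\<in>kerop L Ps. DAs L z) \<and>
            kerop L Ps \<subseteq> kerBs L \<and>
            fin_dim L (kerop L Ps) \<and>
            (\<forall>lam::complex. \<forall>z\<in>kerBs L.
                aeq L (\<lambda>x. lam * z x - As L g z x) (\<lambda>_. 0) \<longrightarrow> aeq L z (\<lambda>_. 0)))"
proof
  have g: "gok L g" using assms(2,3) unfolding gok_def by blast
  show "(\<forall>z\<in>kerop L Ps. aeq L z (\<lambda>_. 0)) \<Longrightarrow> ((\<forall>z\<in>kerop L Ps. DAs L z) \<and>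
            kerop L Ps \<subseteq> kerBs L \<and>
            fin_dim L (kerop L Ps) \<and>
            (\<forall>lam::complex. \<forall>z\<in>kerBs L.
                aeq L (\<lambda>x. lam * z x - As L g z x) (\<lambda>_. 0) \<longrightarrow> aeq L z (\<lambda>_. 0)))"
    by (rule forward_dir[OF assms(1) g assms(4-7)])
  assume H: "(\<forall>z\<in>kerop L Ps. DAs L z) \<and>
            kerop L Ps \<subseteq> kerBs L \<and>
            fin_dim L (kerop L Ps) \<and>
            (\<forall>lam::complex. \<forall>z\<in>kerBs L.
                aeq L (\<lambda>x. lam * z x - As L g z x) (\<lambda>_. 0) \<longrightarrow> aeq L z (\<lambda>_. 0))"
  show "\<forall>z\<in>kerop L Ps. aeq L z (\<lambda>_. 0)"
  proof
    fix y assume y: "y \<in> kerop L Ps"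
    have ii: "kerop L Ps \<subseteq> kerBs L" and iii: "fin_dim L (kerop L Ps)"
      and iv: "\<forall>lam::complex. \<forall>z\<in>kerBs L. aeq L (\<lambda>x. lam * z x - As L g z x) (\<lambda>_. 0) \<longrightarrow> aeq L z (\<lambda>_. 0)"
      using H by blast+
    show "aeq L y (\<lambda>_. 0)" by (rule backward_dir[OF assms(1) g assms(4-7) ii iii iv y])
  qed
qed


end
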